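(* With $P$ the Pauli tuple and $\overline{P}=(P_1,P_2,-P_3)$, one has $\mathcal W(\overline{P})=-\mathcal W(P)$, equivalently $\mathcal D_{\overline{P}}=-\mathcal D_P$.
   Context: For $A\in SM_d(\mathbb C)^g$ (tuples of self-adjoint $d\times d$ complex matrices), $\mathcal D_A=\bigcup_n\{X\in SM_n(\mathbb C)^g: I-\sum_i A_i\otimes X_i\succeq0\}$. For a tuple $T$ of operators on a Hilbert space $H$, the matrix range is $\mathcal W(T)=\bigcup_n\{\phi(T):\phi:B(H)\to M_n \text{ unital completely positive}\}$, with $\phi(T)=(\phi(T_1),\dots,\phi(T_g))$. For a set $K$ of tuples, $-K=\{-X: X\in K\}$. The Pauli tuple is $P=\left(\begin{bmatrix}1&0\\0&-1\end{bmatrix},\begin{bmatrix}0&1\\1&0\end{bmatrix},\begin{bmatrix}0&i\\-i&0\end{bmatrix}\right)$. *)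

theory Defs
  imports Complex_Main "Jordan_Normal_Form.Matrix"
begin

definition adj :: "complex mat \<Rightarrow> complex mat" where
  "adj A = mat (dim_col A) (dim_row A) (\<lambda>(i,j). cnj (A $$ (j,i)))"

definition selfadj :: "nat \<Rightarrow> complex mat \<Rightarrow> bool" where
  "selfadj n A \<longleftrightarrow> A \<in> carrier_mat n n \<and> adj A = A"

definition psd :: "nat \<Rightarrow> complex mat \<Rightarrow> bool" where
  "psd n A \<longleftrightarrow> selfadj n A \<and>
     (\<forall>v \<in> carrier_vec n.
        let q = (\<Sum>i<n. \<Sum>j<n. cnj (v $ i) * A $$ (i,j) * v $ j) in Im q = 0 \<and> Re q \<ge> 0)"

definition kron :: "complex mat \<Rightarrow> complex mat \<Rightarrow> complex mat" where
  "kron A X = mat (dim_row A * dim_row X) (dim_col A * dim_col X)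
     (\<lambda>(i,j). A $$ (i div dim_row X, j div dim_col X) * X $$ (i mod dim_row X, j mod dim_col X))"

definition tuple_neg :: "complex mat list \<Rightarrow> complex mat list" where
  "tuple_neg X = map (\<lambda>M. - M) X"

definition set_neg :: "complex mat list set \<Rightarrow> complex mat list set" where
  "set_neg K = tuple_neg ` K"

definition free_spec :: "nat \<Rightarrow> complex mat list \<Rightarrow> complex mat list set" where
  "free_spec d A = {X. \<exists>n. length X = length A \<and> (\<forall>Xi \<in> set X. selfadj n Xi) \<and>
      psd (d*n) (1\<^sub>m (d*n) - foldr (+) (map2 kron A X) (0\<^sub>m (d*n) (d*n)))}"

text \<open>k-th ampliation id_{M_k} \<otimes> \<phi> of a map \<phi> : M_d \<rightarrow> M_n,
  acting blockwise on a (k d) x (k d) matrix viewed as a k x k block matrix.\<close>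
definition ampl :: "nat \<Rightarrow> nat \<Rightarrow> nat \<Rightarrow> (complex mat \<Rightarrow> complex mat) \<Rightarrow> complex mat \<Rightarrow> complex mat" where
  "ampl d n k \<phi> X = mat (k*n) (k*n) (\<lambda>(i,j).
     \<phi> (mat d d (\<lambda>(r,s). X $$ ((i div n)*d + r, (j div n)*d + s))) $$ (i mod n, j mod n))"

definition ucp :: "nat \<Rightarrow> nat \<Rightarrow> (complex mat \<Rightarrow> complex mat) \<Rightarrow> bool" where
  "ucp d n \<phi> \<longleftrightarrow>
     (\<forall>X \<in> carrier_mat d d. \<phi> X \<in> carrier_mat n n) \<and>
     (\<forall>X \<in> carrier_mat d d. \<forall>Y \<in> carrier_mat d d. \<phi> (X + Y) = \<phi> X + \<phi> Y) \<and>
     (\<forall>X \<in> carrier_mat d d. \<forall>c::complex. \<phi> (c \<cdot>\<^sub>m X) = c \<cdot>\<^sub>m \<phi> X) \<and>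
     \<phi> (1\<^sub>m d) = 1\<^sub>m n \<and>
     (\<forall>k X. psd (k*d) X \<longrightarrow> psd (k*n) (ampl d n k \<phi> X))"

definition matrix_range :: "nat \<Rightarrow> complex mat list \<Rightarrow> complex mat list set" where
  "matrix_range d T = {map \<phi> T | \<phi> n. ucp d n \<phi>}"

definition pauli :: "complex mat list" where
  "pauli = [mat_of_rows_list 2 [[1, 0], [0, -1]],
            mat_of_rows_list 2 [[0, 1], [1, 0]],
            mat_of_rows_list 2 [[0, \<i>], [-\<i>, 0]]]"

definition pauli_bar :: "complex mat list" where
  "pauli_bar = [pauli ! 0, pauli ! 1, - (pauli ! 2)]"

end

theory Submission
  imports Defs
begin

definition qf :: "nat \<Rightarrow> complex mat \<Rightarrow> complex vec \<Rightarrow> complex" where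
  "qf m A v = (\<Sum>i<m. \<Sum>j<m. cnj (v $ i) * A $$ (i,j) * v $ j)"

lemma psd_iff: "psd m A \<longleftrightarrow> selfadj m A \<and> (\<forall>v\<in>carrier_vec m. Im (qf m A v) = 0 \<and> Re (qf m A v) \<ge> 0)"
  unfolding psd_def qf_def Let_def by simp

lemma selfadj_iff: "selfadj m A \<longleftrightarrow> A \<in> carrier_mat m m \<and> (\<forall>i<m. \<forall>j<m. A $$ (i,j) = cnj (A $$ (j,i)))"
proof
  assume "selfadj m A"
  then have A: "A \<in> carrier_mat m m" and e: "adj A = A" by (auto simp: selfadj_def)
  have "\<forall>i<m. \<forall>j<m. A $$ (i,j) = cnj (A $$ (j,i))"
  proof (intro allI impI)
    fix i j assume "i < m" "j < m"
    have dA: "dim_row A = m" "dim_col A = m" using A by auto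
    have "adj A $$ (i,j) = cnj (A $$ (j,i))" unfolding adj_def dA using \<open>i<m\<close> \<open>j<m\<close> by simp
    then show "A $$ (i,j) = cnj (A $$ (j,i))" using e by simp
  qed
  then show "A \<in> carrier_mat m m \<and> (\<forall>i<m. \<forall>j<m. A $$ (i,j) = cnj (A $$ (j,i)))" using A by blast
next
  assume h: "A \<in> carrier_mat m m \<and> (\<forall>i<m. \<forall>j<m. A $$ (i,j) = cnj (A $$ (j,i)))"
  then have Am: "A \<in> carrier_mat m m" and h2: "\<And>i j. i<m \<Longrightarrow> j<m \<Longrightarrow> A $$ (i,j) = cnj (A $$ (j,i))" by blast+
  have "adj A = A"
  proof (rule eq_matI)
    fix i j assume "i < dim_row A" "j < dim_col A"
    then show "adj A $$ (i,j) = A $$ (i,j)" using Am h2[of i j] by (simp add: adj_def)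
  qed (use Am in \<open>auto simp: adj_def\<close>)
  then show "selfadj m A" using h by (simp add: selfadj_def)
qed

lemma psd_transfer:
  fixes \<sigma> :: "nat \<Rightarrow> nat" and \<epsilon> :: "nat \<Rightarrow> complex"
  assumes sig: "\<And>i. i < m \<Longrightarrow> \<sigma> i < m \<and> \<sigma> (\<sigma> i) = i"
    and eps: "\<And>i. \<epsilon> i = 1 \<or> \<epsilon> i = -1"
    and B: "B \<in> carrier_mat m m"
    and Be: "\<And>i j. i < m \<Longrightarrow> j < m \<Longrightarrow> B $$ (i,j) = \<epsilon> i * \<epsilon> j * A $$ (\<sigma> i, \<sigma> j)"
    and A: "psd m A"
  shows "psd m B"
proof -
  have ce: "cnj (\<epsilon> i) = \<epsilon> i" for i using eps[of i] by auto
  have sa: "A \<in> carrier_mat m m" "\<And>i j. i<m \<Longrightarrow> j<m \<Longrightarrow> A $$ (i,j) = cnj (A $$ (j,i))"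
    using A unfolding psd_iff selfadj_iff by blast+
  have "selfadj m B"
    unfolding selfadj_iff
  proof (intro conjI B allI impI)
    fix i j assume ij: "i < m" "j < m"
    have "A $$ (\<sigma> i, \<sigma> j) = cnj (A $$ (\<sigma> j, \<sigma> i))" using sig ij sa(2) by blast
    then show "B $$ (i,j) = cnj (B $$ (j,i))" using ij by (simp add: Be ce mult.commute)
  qed
  moreover have bij: "bij_betw \<sigma> {..<m} {..<m}"
    by (rule bij_betw_byWitness[where f'=\<sigma>]) (auto simp: sig)
  have "Im (qf m B v) = 0 \<and> Re (qf m B v) \<ge> 0" if v: "v \<in> carrier_vec m" for v
  proof -
    define w where "w = vec m (\<lambda>k. \<epsilon> (\<sigma> k) * v $ (\<sigma> k))"
    have w: "w \<in> carrier_vec m" by (simp add: w_def)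
    have wi: "w $ (\<sigma> i) = \<epsilon> i * v $ i" if "i < m" for i
      using that sig[OF that] by (simp add: w_def)
    have "qf m B v = (\<Sum>i<m. \<Sum>j<m. cnj (w $ \<sigma> i) * A $$ (\<sigma> i, \<sigma> j) * w $ \<sigma> j)"
      unfolding qf_def
      by (intro sum.cong refl) (simp add: wi Be ce)
    also have "\<dots> = (\<Sum>i<m. \<Sum>j<m. cnj (w $ \<sigma> i) * A $$ (\<sigma> i, j) * w $ j)"
      by (intro sum.cong refl sum.reindex_bij_betw[OF bij])
    also have "\<dots> = qf m A w"
      unfolding qf_def
      by (rule sum.reindex_bij_betw[OF bij, where g = "\<lambda>i. \<Sum>j<m. cnj (w $ i) * A $$ (i, j) * w $ j"])
    finally show ?thesis using A w by (simp add: psd_iff)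
  qed
  ultimately show ?thesis by (simp add: psd_iff)
qed

definition sg :: "nat \<Rightarrow> complex" where "sg i = (if even i then 1 else -1)"
definition T2 :: "complex mat \<Rightarrow> complex mat" where
  "T2 X = mat 2 2 (\<lambda>(r,s). sg r * sg s * X $$ (1-r, 1-s))"
definition sw :: "nat \<Rightarrow> nat" where "sw i = 2*(i div 2) + (1 - i mod 2)"

lemma sg_pm: "sg i = 1 \<or> sg i = -1" by (simp add: sg_def)

lemma less2: "(i::nat) < 2 \<longleftrightarrow> i = 0 \<or> i = 1" by auto

lemma T2_carrier[simp]: "T2 X \<in> carrier_mat 2 2" by (simp add: T2_def)

lemma T2_add: "X \<in> carrier_mat 2 2 \<Longrightarrow> Y \<in> carrier_mat 2 2 \<Longrightarrow> T2 (X + Y) = T2 X + T2 Y"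
  by (rule eq_matI) (auto simp: T2_def distrib_left less2)

lemma T2_smult: "X \<in> carrier_mat 2 2 \<Longrightarrow> T2 (c \<cdot>\<^sub>m X) = c \<cdot>\<^sub>m T2 X"
  by (rule eq_matI) (auto simp: T2_def less2)

lemma T2_one: "T2 (1\<^sub>m 2) = 1\<^sub>m 2"
  by (rule eq_matI) (auto simp: T2_def sg_def less2)

lemma sw_alt: "sw i = (if even i then i + 1 else i - 1)"
  by (cases "even i") (auto simp: sw_def elim!: evenE oddE)

lemma sw_props: "i < k*2 \<Longrightarrow> sw i < k*2 \<and> sw (sw i) = i"
  by (cases "even i") (auto simp: sw_alt elim!: evenE oddE)

lemma sw_block: "r < 2 \<Longrightarrow> sw (a*2 + r) = a*2 + (1 - r)"
  unfolding sw_def by (auto simp: less2)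

lemma sg_block: "sg (a*2 + r) = sg r"
  by (simp add: sg_def)

lemma ucp_T2:
  assumes u: "ucp 2 n \<phi>"
  shows "ucp 2 n (\<lambda>X. \<phi> (T2 X))"
proof -
  have c: "\<forall>X \<in> carrier_mat 2 2. \<phi> X \<in> carrier_mat n n"
   and a: "\<forall>X \<in> carrier_mat 2 2. \<forall>Y \<in> carrier_mat 2 2. \<phi> (X + Y) = \<phi> X + \<phi> Y"
   and s: "\<forall>X \<in> carrier_mat 2 2. \<forall>c::complex. \<phi> (c \<cdot>\<^sub>m X) = c \<cdot>\<^sub>m \<phi> X"
   and o: "\<phi> (1\<^sub>m 2) = 1\<^sub>m n"
   and p: "\<forall>k X. psd (k*2) X \<longrightarrow> psd (k*n) (ampl 2 n k \<phi> X)"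
    using u unfolding ucp_def by blast+
  have cp: "psd (k*n) (ampl 2 n k (\<lambda>X. \<phi> (T2 X)) X)" if X: "psd (k*2) X" for k X
  proof -
    define X' where "X' = mat (k*2) (k*2) (\<lambda>(i,j). sg i * sg j * X $$ (sw i, sw j))"
    have "psd (k*2) X'"
      by (rule psd_transfer[OF _ sg_pm _ _ X, where \<sigma> = sw]) (auto simp: X'_def sw_props)
    then have P: "psd (k*n) (ampl 2 n k \<phi> X')" using p by blast
    have "ampl 2 n k (\<lambda>X. \<phi> (T2 X)) X = ampl 2 n k \<phi> X'"
    proof (rule eq_matI)
      fix i j assume ij: "i < dim_row (ampl 2 n k \<phi> X')" "j < dim_col (ampl 2 n k \<phi> X')"
      then have ij': "i < k*n" "j < k*n" by (auto simp: ampl_def)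
      then have ab: "i div n < k" "j div n < k" by (auto simp: less_mult_imp_div_less)
      have "mat 2 2 (\<lambda>(r,s). X' $$ ((i div n)*2 + r, (j div n)*2 + s))
          = T2 (mat 2 2 (\<lambda>(r,s). X $$ ((i div n)*2 + r, (j div n)*2 + s)))"
      proof (rule eq_matI)
        fix r s assume rs: "r < dim_row (T2 (mat 2 2 (\<lambda>(r,s). X $$ ((i div n)*2 + r, (j div n)*2 + s))))"
          "s < dim_col (T2 (mat 2 2 (\<lambda>(r,s). X $$ ((i div n)*2 + r, (j div n)*2 + s))))"
        then have rs': "r < 2" "s < 2" by (auto simp: T2_def)
        have b1: "(i div n)*2 + r < k*2" "(j div n)*2 + s < k*2" using ab rs' by auto
        show "mat 2 2 (\<lambda>(r,s). X' $$ ((i div n)*2 + r, (j div n)*2 + s)) $$ (r,s)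
          = T2 (mat 2 2 (\<lambda>(r,s). X $$ ((i div n)*2 + r, (j div n)*2 + s))) $$ (r,s)"
          using rs' b1 by (simp add: X'_def T2_def sw_block sg_block)
      qed (auto simp: T2_def)
      then show "ampl 2 n k (\<lambda>X. \<phi> (T2 X)) X $$ (i,j) = ampl 2 n k \<phi> X' $$ (i,j)"
        using ij' by (simp add: ampl_def)
    qed (auto simp: ampl_def)
    then show ?thesis using P by simp
  qed
  show ?thesis unfolding ucp_def
  proof (intro conjI ballI allI impI)
    fix X :: "complex mat" assume "X \<in> carrier_mat 2 2"
    show "\<phi> (T2 X) \<in> carrier_mat n n" using c by simp
  next
    fix X Y :: "complex mat" assume "X \<in> carrier_mat 2 2" "Y \<in> carrier_mat 2 2"
    then show "\<phi> (T2 (X + Y)) = \<phi> (T2 X) + \<phi> (T2 Y)" using a by (simp add: T2_add)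
  next
    fix X :: "complex mat" and c :: complex assume "X \<in> carrier_mat 2 2"
    then show "\<phi> (T2 (c \<cdot>\<^sub>m X)) = c \<cdot>\<^sub>m \<phi> (T2 X)" using s by (simp add: T2_smult)
  next
    show "\<phi> (T2 (1\<^sub>m 2)) = 1\<^sub>m n" using o by (simp add: T2_one)
  next
    fix k X assume "psd (k*2) X" then show "psd (k*n) (ampl 2 n k (\<lambda>X. \<phi> (T2 X)) X)" by (rule cp)
  qed
qed

lemma kron_dims[simp]: "dim_row (kron A X) = dim_row A * dim_row X" "dim_col (kron A X) = dim_col A * dim_col X"
  by (simp_all add: kron_def)

lemma kron_index: "i < dim_row A * dim_row X \<Longrightarrow> j < dim_col A * dim_col X \<Longrightarrow>
   kron A X $$ (i,j) = A $$ (i div dim_row X, j div dim_col X) * X $$ (i mod dim_row X, j mod dim_col X)"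
  by (simp add: kron_def)

lemma less3: "(l::nat) < 3 \<longleftrightarrow> l = 0 \<or> l = 1 \<or> l = 2" by auto

lemma kron_carrier: "A \<in> carrier_mat p q \<Longrightarrow> X \<in> carrier_mat r s \<Longrightarrow> kron A X \<in> carrier_mat (p*r) (q*s)"
  unfolding carrier_mat_def by simp

lemma pauli_carrier: "l < 3 \<Longrightarrow> pauli ! l \<in> carrier_mat 2 2"
  by (auto simp: pauli_def mat_of_rows_list_def numeral_3_eq_3 less_Suc_eq)

lemma pauli_bar_carrier: "l < 3 \<Longrightarrow> pauli_bar ! l \<in> carrier_mat 2 2"
  unfolding less3 by (elim disjE) (simp_all add: pauli_bar_def pauli_carrier uminus_carrier_mat[OF pauli_carrier])

lemma pauli_rel: "l < 3 \<Longrightarrow> a < 2 \<Longrightarrow> b < 2 \<Longrightarrow>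
   pauli_bar ! l $$ (a,b) = - (sg a * sg b * pauli ! l $$ (1-a,1-b))"
  unfolding less3 less2 by (elim disjE) (simp_all add: pauli_bar_def pauli_def mat_of_rows_list_def sg_def)

lemma pauli_rel2: "l < 3 \<Longrightarrow> a < 2 \<Longrightarrow> b < 2 \<Longrightarrow>
   pauli ! l $$ (a,b) = - (sg a * sg b * pauli_bar ! l $$ (1-a,1-b))"
  unfolding less3 less2 by (elim disjE) (simp_all add: pauli_bar_def pauli_def mat_of_rows_list_def sg_def)

lemma T2_pauli: "l < 3 \<Longrightarrow> T2 (pauli ! l) = - (pauli_bar ! l)"
  by (rule eq_matI) (auto simp: T2_def pauli_rel pauli_bar_carrier[THEN carrier_matD(1)] pauli_bar_carrier[THEN carrier_matD(2)])

lemma T2_pauli_bar: "l < 3 \<Longrightarrow> T2 (pauli_bar ! l) = - (pauli ! l)"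
  by (rule eq_matI) (auto simp: T2_def pauli_rel2 pauli_carrier[THEN carrier_matD(1)] pauli_carrier[THEN carrier_matD(2)])

definition MM :: "nat \<Rightarrow> complex mat list \<Rightarrow> complex mat list \<Rightarrow> complex mat" where
  "MM n A X = 1\<^sub>m (2*n) - foldr (+) (map2 kron A X) (0\<^sub>m (2*n) (2*n))"

lemma MM_carrier: "A = [A0,A1,A2] \<Longrightarrow> X = [X0,X1,X2] \<Longrightarrow> A0 \<in> carrier_mat 2 2 \<Longrightarrow> A1 \<in> carrier_mat 2 2 \<Longrightarrow> A2 \<in> carrier_mat 2 2 \<Longrightarrow>
   X0 \<in> carrier_mat n n \<Longrightarrow> X1 \<in> carrier_mat n n \<Longrightarrow> X2 \<in> carrier_mat n n \<Longrightarrow>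
   MM n A X \<in> carrier_mat (2*n) (2*n)"
  unfolding MM_def
  by (intro minus_carrier_mat one_carrier_mat) (simp add: kron_carrier)

lemma MM_entry:
  assumes X: "X = [X0,X1,X2]" and Ae: "A = [A0,A1,A2]"
    and Ac: "A0 \<in> carrier_mat 2 2" "A1 \<in> carrier_mat 2 2" "A2 \<in> carrier_mat 2 2"
    and c: "X0 \<in> carrier_mat n n" "X1 \<in> carrier_mat n n" "X2 \<in> carrier_mat n n"
    and ij: "i < 2*n" "j < 2*n"
  shows "MM n A X $$ (i,j) = (if i = j then 1 else 0) - (\<Sum>l<3. A ! l $$ (i div n, j div n) * X ! l $$ (i mod n, j mod n))"
proof -
  show ?thesis
    using Ac c ij by (simp add: MM_def Ae X kron_index numeral_3_eq_3 lessThan_Suc)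
qed

definition fl :: "nat \<Rightarrow> nat \<Rightarrow> nat" where "fl n i = (1 - i div n) * n + i mod n"

lemma fl_props: "i < 2*n \<Longrightarrow> fl n i < 2*n \<and> fl n (fl n i) = i \<and> fl n i div n = 1 - i div n \<and> fl n i mod n = i mod n"
proof -
  assume i: "i < 2*n"
  then have n: "n > 0" by auto
  have q: "i div n < 2" using i by (simp add: less_mult_imp_div_less mult.commute)
  have r: "i mod n < n" using n by simp
  have a: "fl n i div n = 1 - i div n" unfolding fl_def using r n by simp
  have b: "fl n i mod n = i mod n" unfolding fl_def using r n by simp
  have e: "i = (i div n) * n + i mod n" by simp
  have c: "fl n i < 2*n \<and> fl n (fl n i) = i"
  proof (cases "i div n = 0")
    case True
    then have "fl n i = n + i mod n" by (simp add: fl_def)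
    moreover have "fl n (n + i mod n) = i mod n" using r n by (simp add: fl_def)
    moreover have "i = i mod n" using e True by simp
    ultimately show ?thesis using r by simp
  next
    case False
    then have 1: "i div n = 1" using q by simp
    then have "fl n i = i mod n" by (simp add: fl_def)
    moreover have "fl n (i mod n) = n + i mod n" using r n by (simp add: fl_def)
    moreover have "i = n + i mod n" using e 1 by simp
    ultimately show ?thesis using r by simp
  qed
  then have d: "fl n (fl n i) = i" by blast
  show ?thesis using a b c d by blast
qed

lemma sg_sq: "sg a * sg a = 1" by (simp add: sg_def)

lemma sg_flip: "a < 2 \<Longrightarrow> sg (1 - a) = - sg a" by (auto simp: sg_def less2)
lemma sg_flip': "a < 2 \<Longrightarrow> sg (Suc 0 - a) = - sg a" by (auto simp: sg_def less2)

lemma tuple_neg3: "tuple_neg [X0,X1,X2] = [-X0,-X1,-X2]" by (simp add: tuple_neg_def)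

lemma pauli_list: "pauli = [pauli!0, pauli!1, pauli!2]" by (simp add: pauli_def)
lemma pauli_bar_list: "pauli_bar = [pauli_bar!0, pauli_bar!1, pauli_bar!2]" by (simp add: pauli_bar_def)

lemma MM_E:
  assumes X: "X = [X0,X1,X2]"
    and c: "X0 \<in> carrier_mat n n" "X1 \<in> carrier_mat n n" "X2 \<in> carrier_mat n n"
    and ij: "i < 2*n" "j < 2*n"
  shows "MM n pauli_bar X $$ (i,j) = sg (i div n) * sg (j div n) * MM n pauli (tuple_neg X) $$ (fl n i, fl n j)"
proof -
  have n: "n > 0" using ij by auto
  define a where "a = i div n"
  define b where "b = j div n"
  have ab: "a < 2" "b < 2" using ij by (auto simp: a_def b_def less_mult_imp_div_less mult.commute)
  have fi: "fl n i < 2*n" "fl n i div n = 1 - a" "fl n i mod n = i mod n" using fl_props[OF ij(1)] by (auto simp: a_def)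
  have fj: "fl n j < 2*n" "fl n j div n = 1 - b" "fl n j mod n = j mod n" using fl_props[OF ij(2)] by (auto simp: b_def)
  have L: "MM n pauli_bar X $$ (i,j) = (if i = j then 1 else 0) - (\<Sum>l<3. pauli_bar ! l $$ (a, b) * X ! l $$ (i mod n, j mod n))"
    unfolding a_def b_def
    by (rule MM_entry[OF X pauli_bar_list pauli_bar_carrier pauli_bar_carrier pauli_bar_carrier c ij]) simp_all
  have tX: "tuple_neg X = [-X0,-X1,-X2]" by (simp add: X tuple_neg3)
  have R: "MM n pauli (tuple_neg X) $$ (fl n i, fl n j) = (if fl n i = fl n j then 1 else 0)
      - (\<Sum>l<3. pauli ! l $$ (1 - a, 1 - b) * tuple_neg X ! l $$ (i mod n, j mod n))"
    using MM_entry[OF tX pauli_list pauli_carrier pauli_carrier pauli_carrier _ _ _ fi(1) fj(1)] c fi fj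
    by simp
  have Xl: "\<And>l. l < 3 \<Longrightarrow> X ! l \<in> carrier_mat n n" using c unfolding X less3 by auto
  have im: "i mod n < n" "j mod n < n" using n by auto
  have s1: "(\<Sum>l<3. pauli_bar ! l $$ (a, b) * X ! l $$ (i mod n, j mod n))
     = sg a * sg b * (\<Sum>l<3. pauli ! l $$ (1 - a, 1 - b) * tuple_neg X ! l $$ (i mod n, j mod n))"
  proof -
    have "(\<Sum>l<3. pauli_bar ! l $$ (a, b) * X ! l $$ (i mod n, j mod n))
       = (\<Sum>l<3. sg a * sg b * (pauli ! l $$ (1 - a, 1 - b) * tuple_neg X ! l $$ (i mod n, j mod n)))"
    proof (rule sum.cong[OF refl])
      fix l assume "l \<in> {..<3::nat}"
      then have l: "l < 3" by simp
      have "tuple_neg X ! l $$ (i mod n, j mod n) = - (X ! l $$ (i mod n, j mod n))"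
        using c im l unfolding X less3 by (elim disjE) (simp_all add: tuple_neg3)
      then show "pauli_bar ! l $$ (a, b) * X ! l $$ (i mod n, j mod n)
         = sg a * sg b * (pauli ! l $$ (1 - a, 1 - b) * tuple_neg X ! l $$ (i mod n, j mod n))"
        using pauli_rel[OF l ab] by simp
    qed
    also have "\<dots> = sg a * sg b * (\<Sum>l<3. pauli ! l $$ (1 - a, 1 - b) * tuple_neg X ! l $$ (i mod n, j mod n))"
      by (simp add: sum_distrib_left)
    finally show ?thesis .
  qed
  have s2: "(if i = j then 1 else 0) = sg a * sg b * (if fl n i = fl n j then (1::complex) else 0)"
  proof (cases "i = j")
    case True then show ?thesis by (simp add: a_def b_def sg_sq)
  next
    case False
    have "fl n i \<noteq> fl n j"
    proof
      assume eq: "fl n i = fl n j"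
      have "i = fl n (fl n i)" using fl_props[OF ij(1)] by simp
      also have "\<dots> = fl n (fl n j)" using eq by simp
      also have "\<dots> = j" using fl_props[OF ij(2)] by simp
      finally show False using False by simp
    qed
    then show ?thesis using False by simp
  qed
  define S where "S = (\<Sum>l<3. pauli ! l $$ (1 - a, 1 - b) * tuple_neg X ! l $$ (i mod n, j mod n))"
  have "sg (i div n) * sg (j div n) * MM n pauli (tuple_neg X) $$ (fl n i, fl n j)
      = sg a * sg b * ((if fl n i = fl n j then 1 else 0) - S)" using R by (simp add: a_def b_def S_def)
  also have "\<dots> = sg a * sg b * (if fl n i = fl n j then 1 else 0) - sg a * sg b * S"
    by (simp add: right_diff_distrib)
  also have "\<dots> = (if i = j then 1 else 0) - sg a * sg b * S" by (simp only: s2)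
  also have "\<dots> = MM n pauli_bar X $$ (i,j)" unfolding L s1 S_def by (rule refl)
  finally show ?thesis by simp
qed



lemma psd_equiv:
  assumes X: "X = [X0,X1,X2]"
    and c: "X0 \<in> carrier_mat n n" "X1 \<in> carrier_mat n n" "X2 \<in> carrier_mat n n"
  shows "psd (2*n) (MM n pauli_bar X) \<longleftrightarrow> psd (2*n) (MM n pauli (tuple_neg X))"
proof -
  have tX: "tuple_neg X = [-X0,-X1,-X2]" by (simp add: X tuple_neg3)
  have cb: "MM n pauli_bar X \<in> carrier_mat (2*n) (2*n)"
    by (rule MM_carrier[OF pauli_bar_list X pauli_bar_carrier pauli_bar_carrier pauli_bar_carrier c]) simp_all
  have cp: "MM n pauli (tuple_neg X) \<in> carrier_mat (2*n) (2*n)"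
    by (rule MM_carrier[OF pauli_list tX pauli_carrier pauli_carrier pauli_carrier]) (use c in auto)
  have sig: "\<And>i. i < 2*n \<Longrightarrow> fl n i < 2*n \<and> fl n (fl n i) = i" using fl_props by blast
  have eps: "\<And>i. sg (i div n) = 1 \<or> sg (i div n) = -1" using sg_pm by blast
  show ?thesis
  proof
    assume "psd (2*n) (MM n pauli_bar X)"
    show "psd (2*n) (MM n pauli (tuple_neg X))"
    proof (rule psd_transfer[where \<sigma>="fl n" and \<epsilon>="\<lambda>i. sg (i div n)", OF sig eps cp _ \<open>psd (2*n) (MM n pauli_bar X)\<close>])
      fix i j assume ij: "i < 2*n" "j < 2*n"
      have fi: "fl n i < 2*n" "fl n (fl n i) = i" "fl n i div n = 1 - i div n" using fl_props[OF ij(1)] by auto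
      have fj: "fl n j < 2*n" "fl n (fl n j) = j" "fl n j div n = 1 - j div n" using fl_props[OF ij(2)] by auto
      have ab: "i div n < 2" "j div n < 2" using ij by (auto simp: less_mult_imp_div_less mult.commute)
      have "MM n pauli_bar X $$ (fl n i, fl n j) = sg (i div n) * sg (j div n) * MM n pauli (tuple_neg X) $$ (i, j)"
        using MM_E[OF X c fi(1) fj(1)] fi fj by (simp add: sg_flip sg_flip' ab)
      then have "sg (i div n) * sg (j div n) * MM n pauli_bar X $$ (fl n i, fl n j)
          = (sg (i div n) * sg (i div n)) * (sg (j div n) * sg (j div n)) * MM n pauli (tuple_neg X) $$ (i, j)"
        by (simp add: algebra_simps)
      then show "MM n pauli (tuple_neg X) $$ (i, j) = sg (i div n) * sg (j div n) * MM n pauli_bar X $$ (fl n i, fl n j)"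
        by (simp add: sg_sq)
    qed
  next
    assume "psd (2*n) (MM n pauli (tuple_neg X))"
    show "psd (2*n) (MM n pauli_bar X)"
    proof (rule psd_transfer[where \<sigma>="fl n" and \<epsilon>="\<lambda>i. sg (i div n)", OF sig eps cb _ \<open>psd (2*n) (MM n pauli (tuple_neg X))\<close>])
      fix i j assume "i < 2*n" "j < 2*n"
      then show "MM n pauli_bar X $$ (i, j) = sg (i div n) * sg (j div n) * MM n pauli (tuple_neg X) $$ (fl n i, fl n j)"
        by (rule MM_E[OF X c])
    qed
  qed
qed

lemma selfadj_neg:
  assumes "selfadj n M" shows "selfadj n (- M)"
proof -
  have M: "M \<in> carrier_mat n n" and h: "\<And>i j. i<n \<Longrightarrow> j<n \<Longrightarrow> M $$ (i,j) = cnj (M $$ (j,i))"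
    using assms unfolding selfadj_iff by blast+
  show ?thesis unfolding selfadj_iff
  proof (intro conjI allI impI)
    show "- M \<in> carrier_mat n n" using M by simp
    fix i j assume "i < n" "j < n"
    then show "(- M) $$ (i,j) = cnj ((- M) $$ (j,i))" using M h[of i j] by simp
  qed
qed

lemma len3: "length X = 3 \<Longrightarrow> X = [X!0, X!1, X!2]"
  by (rule nth_equalityI) (auto simp: less3)

lemma tuple_neg_neg: "tuple_neg (tuple_neg X) = X"
  by (simp add: tuple_neg_def comp_def)

lemma fs_iff: "X \<in> free_spec 2 pauli_bar \<longleftrightarrow> tuple_neg X \<in> free_spec 2 pauli"
proof -
  have lp: "length pauli = 3" "length pauli_bar = 3" by (simp_all add: pauli_def pauli_bar_def)
  have key: "(length X = 3 \<and> (\<forall>Xi \<in> set X. selfadj n Xi) \<and> psd (2*n) (MM n pauli_bar X)) \<longleftrightarrow>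
        (length (tuple_neg X) = 3 \<and> (\<forall>Xi \<in> set (tuple_neg X). selfadj n Xi) \<and> psd (2*n) (MM n pauli (tuple_neg X)))" for n
  proof (cases "length X = 3")
    case True
    define X0 where "X0 = X!0"
    define X1 where "X1 = X!1"
    define X2 where "X2 = X!2"
    have Xe: "X = [X0,X1,X2]" using len3[OF True] by (simp add: X0_def X1_def X2_def)
    have sa: "(\<forall>Xi \<in> set X. selfadj n Xi) \<longleftrightarrow> (\<forall>Xi \<in> set (tuple_neg X). selfadj n Xi)"
    proof
      assume "\<forall>Xi \<in> set X. selfadj n Xi" then show "\<forall>Xi \<in> set (tuple_neg X). selfadj n Xi"
        by (auto simp: tuple_neg_def intro: selfadj_neg)
    next
      assume h: "\<forall>Xi \<in> set (tuple_neg X). selfadj n Xi"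
      show "\<forall>Xi \<in> set X. selfadj n Xi"
      proof
        fix Xi assume "Xi \<in> set X"
        then have "- Xi \<in> set (tuple_neg X)" by (simp add: tuple_neg_def)
        then have "selfadj n (- (- Xi))" using h selfadj_neg by blast
        then show "selfadj n Xi" by simp
      qed
    qed
    show ?thesis
    proof (cases "\<forall>Xi \<in> set X. selfadj n Xi")
      case True2: True
      have c: "X0 \<in> carrier_mat n n" "X1 \<in> carrier_mat n n" "X2 \<in> carrier_mat n n"
        using True2 by (auto simp: Xe selfadj_def)
      show ?thesis using psd_equiv[OF Xe c] sa True by (simp add: tuple_neg_def)
    next
      case False
      then show ?thesis using sa by blast
    qed
  next
    case False
    then show ?thesis by (simp add: tuple_neg_def)
  qed
  show ?thesis
    unfolding free_spec_def mem_Collect_eq lp MM_def[symmetric]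
    using key by blast
qed

lemma fs_eq: "free_spec 2 pauli_bar = set_neg (free_spec 2 pauli)"
  unfolding set_neg_def
proof (intro equalityI subsetI)
  fix X assume "X \<in> free_spec 2 pauli_bar"
  then have "tuple_neg X \<in> free_spec 2 pauli" using fs_iff by blast
  moreover have "X = tuple_neg (tuple_neg X)" by (simp add: tuple_neg_neg)
  ultimately show "X \<in> tuple_neg ` free_spec 2 pauli" by blast
next
  fix X assume "X \<in> tuple_neg ` free_spec 2 pauli"
  then obtain Y where X: "X = tuple_neg Y" and Y: "Y \<in> free_spec 2 pauli" by blast
  have "tuple_neg X \<in> free_spec 2 pauli" using Y by (simp add: X tuple_neg_neg)
  then show "X \<in> free_spec 2 pauli_bar" using fs_iff by blast
qed

lemma neg_smult: "(-1::complex) \<cdot>\<^sub>m A = - A"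
  by (rule eq_matI) auto

lemma phi_neg: "ucp 2 n \<phi> \<Longrightarrow> M \<in> carrier_mat 2 2 \<Longrightarrow> \<phi> (- M) = - \<phi> M"
  unfolding ucp_def by (metis neg_smult)

lemma mr1: assumes u: "ucp 2 n \<phi>"
  shows "map \<phi> pauli_bar = tuple_neg (map (\<lambda>X. \<phi> (T2 X)) pauli)"
proof -
  have "map \<phi> pauli_bar = [\<phi> (pauli_bar!0), \<phi> (pauli_bar!1), \<phi> (pauli_bar!2)]"
    by (subst pauli_bar_list) simp
  also have "\<dots> = tuple_neg (map (\<lambda>X. \<phi> (T2 X)) [pauli!0, pauli!1, pauli!2])"
    using phi_neg[OF u pauli_bar_carrier] by (simp add: tuple_neg_def T2_pauli)
  also have "[pauli!0, pauli!1, pauli!2] = pauli" by (rule pauli_list[symmetric])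
  finally show ?thesis .
qed

lemma mr2: assumes u: "ucp 2 n \<phi>"
  shows "map (\<lambda>X. \<phi> (T2 X)) pauli_bar = tuple_neg (map \<phi> pauli)"
proof -
  have "map (\<lambda>X. \<phi> (T2 X)) pauli_bar = map (\<lambda>X. \<phi> (T2 X)) [pauli_bar!0, pauli_bar!1, pauli_bar!2]"
    by (subst pauli_bar_list) (rule refl)
  also have "\<dots> = tuple_neg [\<phi> (pauli!0), \<phi> (pauli!1), \<phi> (pauli!2)]"
    using phi_neg[OF u pauli_carrier] by (simp add: tuple_neg_def T2_pauli_bar)
  also have "\<dots> = tuple_neg (map \<phi> pauli)"
    by (subst (2) pauli_list) simp
  finally show ?thesis .
qed

lemma mr_eq: "matrix_range 2 pauli_bar = set_neg (matrix_range 2 pauli)"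
  unfolding matrix_range_def set_neg_def
proof (intro equalityI subsetI)
  fix Y assume "Y \<in> {map \<phi> pauli_bar |\<phi> n. ucp 2 n \<phi>}"
  then obtain \<phi> n where Y: "Y = map \<phi> pauli_bar" and u: "ucp 2 n \<phi>" by blast
  have "map (\<lambda>X. \<phi> (T2 X)) pauli \<in> {map \<phi> pauli |\<phi> n. ucp 2 n \<phi>}"
    using ucp_T2[OF u] by blast
  then show "Y \<in> tuple_neg ` {map \<phi> pauli |\<phi> n. ucp 2 n \<phi>}"
    unfolding Y mr1[OF u] by (rule imageI)
next
  fix Y assume "Y \<in> tuple_neg ` {map \<phi> pauli |\<phi> n. ucp 2 n \<phi>}"
  then obtain \<phi> n where Y: "Y = tuple_neg (map \<phi> pauli)" and u: "ucp 2 n \<phi>" by blast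
  show "Y \<in> {map \<phi> pauli_bar |\<phi> n. ucp 2 n \<phi>}"
    unfolding Y mr2[OF u, symmetric] using ucp_T2[OF u] by blast
qed

theorem mainTheorem2:
  shows "matrix_range 2 pauli_bar = set_neg (matrix_range 2 pauli)
       \<and> free_spec 2 pauli_bar = set_neg (free_spec 2 pauli)"
  using mr_eq fs_eq by blast

end
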